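(* Let $S\subseteq\mathbb{R}^n$ be a closed set and $C\subseteq\mathbb{R}^n$ a convex $S$-free set. Assume $C=\{x\in\mathbb{R}^n : \alpha^\mathsf{T} x\le\beta\ \forall(\alpha,\beta)\in\Gamma\}$ for some family $\Gamma$ of inequalities, and that for every $(\alpha,\beta)\in\Gamma$ there is a point $x\in S\cap C$ that exposes $(\alpha,\beta)$ with respect to $C$. Then $C$ is maximal $S$-free.
   Context: A convex set $C$ is $S$-free if $\operatorname{int}(C)\cap S=\emptyset$, and maximal $S$-free if it is $S$-free and no $S$-free convex set strictly contains it. An inequality $\alpha^\mathsf{T} x\le\beta$ (written $(\alpha,\beta)$) is valid for $C$ if it holds on $C$; it is non-trivial if $\alpha\neq0$. A point $x_0$ exposes a valid inequality $(\alpha,\beta)$ with respect to convex $C$ if $\alpha^\mathsf{T} x_0=\beta$ and for every non-trivial valid inequality $\gamma^\mathsf{T} x\le\delta$ for $C$ with $\gamma^\mathsf{T} x_0=\delta$ there is $\mu>0$ with $\gamma=\mu\alpha$ and $\delta=\mu\beta$. *)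

theory Defs
  imports "HOL-Analysis.Analysis"
begin

definition S_free :: "'a::euclidean_space set \<Rightarrow> 'a set \<Rightarrow> bool" where
  "S_free S C \<longleftrightarrow> convex C \<and> interior C \<inter> S = {}"

definition maximal_S_free :: "'a::euclidean_space set \<Rightarrow> 'a set \<Rightarrow> bool" where
  "maximal_S_free S C \<longleftrightarrow> S_free S C \<and> (\<forall>D. S_free S D \<and> C \<subseteq> D \<longrightarrow> D = C)"

definition valid_ineq :: "'a::euclidean_space set \<Rightarrow> 'a \<Rightarrow> real \<Rightarrow> bool" where
  "valid_ineq C \<alpha> \<beta> \<longleftrightarrow> (\<forall>x\<in>C. \<alpha> \<bullet> x \<le> \<beta>)"

definition exposes :: "'a::euclidean_space set \<Rightarrow> 'a \<Rightarrow> 'a \<Rightarrow> real \<Rightarrow> bool" where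
  "exposes C x0 \<alpha> \<beta> \<longleftrightarrow> valid_ineq C \<alpha> \<beta> \<and> \<alpha> \<bullet> x0 = \<beta> \<and>
     (\<forall>\<gamma> \<delta>. \<gamma> \<noteq> 0 \<and> valid_ineq C \<gamma> \<delta> \<and> \<gamma> \<bullet> x0 = \<delta> \<longrightarrow>
        (\<exists>\<mu>>0. \<gamma> = \<mu> *\<^sub>R \<alpha> \<and> \<delta> = \<mu> * \<beta>))"

end

theory Submission
  imports Defs
begin

lemma support_lemma:
  fixes D :: "'a::euclidean_space set"
  assumes "convex D" "x0 \<in> D" "x0 \<notin> interior D"
  shows "\<exists>g. g \<noteq> 0 \<and> (\<forall>y\<in>D. g \<bullet> y \<le> g \<bullet> x0)"
proof (cases "interior D = {}")
  case True
  then obtain a b where "a \<noteq> 0" "D \<subseteq> {x. a \<bullet> x = b}"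
    using empty_interior_subset_hyperplane assms(1) by metis
  then show ?thesis using assms(2) by (intro exI[of _ a]) (auto simp: subset_iff)
next
  case False
  then have ri: "rel_interior D = interior D" by (rule rel_interior_nonempty_interior)
  have "x0 \<in> closure D" using assms(2) closure_subset by blast
  then obtain a where a: "a \<noteq> 0" "\<And>y. y \<in> closure D \<Longrightarrow> a \<bullet> x0 \<le> a \<bullet> y"
    using supporting_hyperplane_relative_frontier[OF assms(1)] assms(3) ri by metis
  show ?thesis
  proof (intro exI[of _ "-a"] conjI ballI)
    show "-a \<noteq> 0" using a by simp
    fix y assume "y \<in> D"
    then have "a \<bullet> x0 \<le> a \<bullet> y" using a closure_subset by blast
    then show "(-a) \<bullet> y \<le> (-a) \<bullet> x0" by simp
  qed
qed

theorem theorem2: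
  fixes S C :: "'a::euclidean_space set" and \<Gamma> :: "('a \<times> real) set"
  assumes "closed S"
    and "S_free S C"
    and "C = {x. \<forall>(\<alpha>, \<beta>)\<in>\<Gamma>. \<alpha> \<bullet> x \<le> \<beta>}"
    and "\<forall>(\<alpha>, \<beta>)\<in>\<Gamma>. \<exists>x\<in>S \<inter> C. exposes C x \<alpha> \<beta>"
  shows "maximal_S_free S C"
  unfolding maximal_S_free_def
proof (intro conjI allI impI)
  show "S_free S C" by fact
  fix D assume DD: "S_free S D \<and> C \<subseteq> D"
  show "D = C"
  proof (rule ccontr)
    assume "D \<noteq> C"
    with DD obtain y where y: "y \<in> D" "y \<notin> C" by blast
    then obtain \<alpha> \<beta> where ab: "(\<alpha>, \<beta>) \<in> \<Gamma>" "\<alpha> \<bullet> y > \<beta>"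
      using assms(3) by force
    then obtain x0 where x0: "x0 \<in> S" "x0 \<in> C" "exposes C x0 \<alpha> \<beta>"
      using assms(4) by fastforce
    have cD: "convex D" and iD: "interior D \<inter> S = {}" using DD by (auto simp: S_free_def)
    have "x0 \<in> D" using DD x0 by blast
    moreover have "x0 \<notin> interior D" using iD x0 by blast
    ultimately obtain g where g: "g \<noteq> 0" "\<forall>z\<in>D. g \<bullet> z \<le> g \<bullet> x0"
      using support_lemma[OF cD] by blast
    have "valid_ineq C g (g \<bullet> x0)" using g DD unfolding valid_ineq_def by blast
    then obtain \<mu> where mu: "\<mu> > 0" "g = \<mu> *\<^sub>R \<alpha>" "g \<bullet> x0 = \<mu> * \<beta>"
      using x0(3) g(1) unfolding exposes_def by blast
    have "g \<bullet> y \<le> g \<bullet> x0" using g y by blast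
    then have "\<mu> * (\<alpha> \<bullet> y) \<le> \<mu> * \<beta>" using mu by simp
    then have "\<alpha> \<bullet> y \<le> \<beta>" using mu(1) by simp
    then show False using ab by simp
  qed
qed

end
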